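(* Let $q$ be a prime power and let $C\subseteq\mathrm{GF}(q^m)^n$ be a (linear or nonlinear) code with $n\le m$, $|C|=q^{mk}$ for an integer $1\le k\le n$, and minimum rank distance $d_{\mathrm R}=n-k+1$; let $r=n-k$. For an integer $u$ let $A_u$ be the number of codewords of $C$ of rank $u$. Then for every $u$ with $d_{\mathrm R}\le u\le n$, $$A_u\le{n\brack u}A(m,u-r).$$
   Context: For $\mathbf x=(x_0,\dots,x_{n-1})\in\mathrm{GF}(q^m)^n$, $\mathrm{rk}(\mathbf x)$ is the dimension over $\mathrm{GF}(q)$ of the $\mathrm{GF}(q)$-span of $x_0,\dots,x_{n-1}$; the minimum rank distance of $C$ is the minimum of $\mathrm{rk}(\mathbf c-\mathbf d)$ over distinct codewords. $A(m,0)=1$, $A(m,j)=\prod_{i=0}^{j-1}(q^m-q^i)$ for $j\ge1$, and ${n\brack u}=A(n,u)/A(u,u)$. *)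

theory Defs
  imports "HOL-Analysis.Analysis"
begin

text \<open>Model: GF(q) is a finite field type 'a (q = CARD('a)); GF(q^m) is identified,
  as a GF(q)-vector space, with 'a^'m (m = CARD('m)); a word of length n is an
  element of ('a^'m)^'n (n = CARD('n)).\<close>

definition rk :: "('a::field ^ 'm) ^ 'n \<Rightarrow> nat" where
  "rk x = vec.dim (range (\<lambda>i. x $ i))"

definition min_rank_dist :: "(('a::field ^ 'm) ^ 'n) set \<Rightarrow> nat" where
  "min_rank_dist C = Min {rk (c - d) | c d. c \<in> C \<and> d \<in> C \<and> c \<noteq> d}"

definition A_fun :: "nat \<Rightarrow> nat \<Rightarrow> nat \<Rightarrow> real" where
  "A_fun q m j = (\<Prod>i<j. (real q ^ m - real q ^ i))"

definition gauss_binom :: "nat \<Rightarrow> nat \<Rightarrow> nat \<Rightarrow> real" where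
  "gauss_binom q n u = A_fun q n u / A_fun q u u"

definition weight_count :: "(('a::field ^ 'm) ^ 'n) set \<Rightarrow> nat \<Rightarrow> nat" where
  "weight_count C u = card {c \<in> C. rk c = u}"

end

theory Submission
  imports Defs
begin


definition Lc :: "('a::field ^ 'm) ^ 'n \<Rightarrow> 'a ^ 'n \<Rightarrow> 'a ^ 'm" where
  "Lc c a = (\<Sum>i\<in>UNIV. a $ i *s c $ i)"

lemma Lc_eq: "Lc c = (*v) (transpose c)"
  by (rule ext) (simp add: Lc_def vec_eq_iff matrix_vector_mult_def transpose_def mult.commute)

lemma Lc_linear: "Vector_Spaces.linear (*s) (*s) (Lc c)"
  unfolding Lc_eq by (rule matrix_vector_mul_linear_gen)

lemma Lc_axis: "Lc c (axis j 1) = c $ j"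
proof -
  have "\<And>i. axis j 1 $ i *s c $ i = (if i = j then c $ j else 0)"
    by (simp add: axis_def)
  then show ?thesis unfolding Lc_def by simp
qed

lemma Lc_diff: "Lc (c - d) a = Lc c a - Lc d a"
  unfolding Lc_def by (simp add: sum_subtractf[symmetric] vector_ssub_ldistrib)

lemma span_inter_zero:
  fixes A B :: "('a::field ^ 'k) set"
  assumes "finite B" "vec.independent (A \<union> B)" "A \<inter> B = {}" "x \<in> vec.span A" "x \<in> vec.span B"
  shows "x = 0"
  using assms
proof (induction B arbitrary: x rule: finite_induct)
  case empty then show ?case by simp
next
  case (insert t B)
  from insert.prems(4) obtain k where k: "x - k *s t \<in> vec.span B"
    using vec.span_breakdown_eq by blast
  have indAB: "vec.independent (A \<union> B)" using insert.prems(1) vec.independent_mono by blast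
  have tn: "t \<notin> A \<union> B" using insert by auto
  have tsp: "t \<notin> vec.span (A \<union> B)"
    using insert.prems(1) tn by (simp add: vec.independent_insert)
  show ?case
  proof (cases "k = 0")
    case True
    then show ?thesis using insert.IH[OF indAB _ insert.prems(3)] k insert.prems by auto
  next
    case False
    have "x - (x - k *s t) \<in> vec.span (A \<union> B)"
      by (meson insert.prems(3) k sup_ge1 sup_ge2 vec.span_diff vec.span_mono subsetD)
    then have "inverse k *s (x - (x - k *s t)) \<in> vec.span (A \<union> B)"
      using vec.span_scale by blast
    moreover have "inverse k *s (x - (x - k *s t)) = t" using False by simp
    ultimately show ?thesis using tsp by simp
  qed
qed

lemma card_span_indep:
  fixes B :: "('a::{field,finite} ^ 'k) set"
  assumes "vec.independent B"
  shows "card (vec.span B) = CARD('a) ^ card B"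
proof -
  have "finite B" by simp
  then show ?thesis using assms
  proof (induction B rule: finite_induct)
    case empty then show ?case by simp
  next
    case (insert b B)
    have indB: "vec.independent B" using insert.prems vec.independent_mono by blast
    have bn: "b \<notin> vec.span B" using insert.prems insert.hyps by (simp add: vec.independent_insert)
    let ?f = "\<lambda>p::'a \<times> ('a^'k). fst p *s b + snd p"
    have eq: "vec.span (insert b B) = ?f ` (UNIV \<times> vec.span B)"
    proof (rule set_eqI, rule iffI)
      fix x assume "x \<in> vec.span (insert b B)"
      then obtain k where "x - k *s b \<in> vec.span B" using vec.span_breakdown_eq by blast
      then show "x \<in> ?f ` (UNIV \<times> vec.span B)"
        by (intro image_eqI[of _ _ "(k, x - k *s b)"]) auto
    next
      fix x assume "x \<in> ?f ` (UNIV \<times> vec.span B)"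
      then obtain p where p: "p \<in> UNIV \<times> vec.span B" "x = ?f p" by blast
      obtain k v where "v \<in> vec.span B" "x = k *s b + v" using p by (cases p) auto
      then show "x \<in> vec.span (insert b B)"
      proof -
        have "b \<in> vec.span (insert b B)" by (simp add: vec.span_base)
        moreover have "v \<in> vec.span (insert b B)"
          using \<open>v \<in> vec.span B\<close> vec.span_mono[of B "insert b B"] by blast
        ultimately show ?thesis unfolding \<open>x = k *s b + v\<close> by (intro vec.span_add vec.span_scale)
      qed
    qed
    have inj: "inj_on ?f (UNIV \<times> vec.span B)"
    proof (rule inj_onI)
      fix p p' assume p: "p \<in> UNIV \<times> vec.span B" and p': "p' \<in> UNIV \<times> vec.span B" and e: "?f p = ?f p'"
      obtain k v where kv: "p = (k, v)" by (cases p)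
      obtain k' v' where kv': "p' = (k', v')" by (cases p')
      have e': "k *s b + v = k' *s b + v'" using e kv kv' by simp
      have e'': "k *s b - k' *s b = v' - v" using e' by (simp add: algebra_simps)
      have ev: "(k - k') *s b = v' - v" unfolding vector_sub_rdistrib by (rule e'')
      have vs: "v' - v \<in> vec.span B" using p p' kv kv' vec.span_diff by auto
      have "k = k'"
      proof (rule ccontr)
        assume "k \<noteq> k'"
        then have "k - k' \<noteq> 0" by simp
        have "inverse (k - k') *s ((k - k') *s b) = b"
        proof -
          have "inverse (k - k') * (k - k') = 1" using \<open>k - k' \<noteq> 0\<close> by simp
          then show ?thesis by (simp only: vector_smult_assoc vector_smult_lid)
        qed
        hence "b = inverse (k - k') *s ((k - k') *s b)" by (rule sym)
        hence "b = inverse (k - k') *s (v' - v)" unfolding ev .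
        moreover have "inverse (k - k') *s (v' - v) \<in> vec.span B" using vs by (rule vec.span_scale)
        ultimately show False using bn by simp
      qed
      then show "p = p'" using ev kv kv' by simp
    qed
    have "card (vec.span (insert b B)) = card ((UNIV :: 'a set) \<times> vec.span B)"
      unfolding eq using card_image[OF inj] by simp
    also have "\<dots> = CARD('a) * CARD('a) ^ card B"
      using insert.IH[OF indB] by (simp add: card_cartesian_product)
    finally show ?case using insert.hyps by simp
  qed
qed

lemma card_subspace:
  fixes W :: "('a::{field,finite} ^ 'k) set"
  assumes "vec.subspace W"
  shows "card W = CARD('a) ^ vec.dim W"
proof -
  obtain B where B: "B \<subseteq> W" "vec.independent B" "W \<subseteq> vec.span B" "card B = vec.dim W"
    using vec.basis_exists by blast
  have "vec.span B = W" using B assms vec.span_minimal by blast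
  then show ?thesis using card_span_indep[OF B(2)] B(4) by simp
qed

definition indl :: "('a::field ^ 'k) set \<Rightarrow> nat \<Rightarrow> ('a ^ 'k) list set" where
  "indl W j = {xs. length xs = j \<and> distinct xs \<and> vec.independent (set xs) \<and> set xs \<subseteq> W}"

lemma finite_indl: "finite (indl (W :: ('a::{field,finite} ^ 'k) set) j)"
proof -
  have "indl W j \<subseteq> {xs. set xs \<subseteq> UNIV \<and> length xs = j}" unfolding indl_def by auto
  moreover have "finite {xs. set xs \<subseteq> (UNIV :: ('a^'k) set) \<and> length xs = j}"
    by (rule finite_lists_length_eq) simp
  ultimately show ?thesis by (rule finite_subset)
qed

lemma indl_Suc:
  "indl W (Suc j) = (\<lambda>p. snd p # fst p) ` (SIGMA xs:indl W j. W - vec.span (set xs))"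
proof (rule set_eqI, rule iffI)
  fix ys assume "ys \<in> indl W (Suc j)"
  then obtain x xs where ys: "ys = x # xs" unfolding indl_def by (cases ys) auto
  with \<open>ys \<in> indl W (Suc j)\<close> have "xs \<in> indl W j" "x \<in> W - vec.span (set xs)"
    unfolding indl_def by (auto simp: vec.independent_insert vec.independent_mono)
  then show "ys \<in> (\<lambda>p. snd p # fst p) ` (SIGMA xs:indl W j. W - vec.span (set xs))"
    using ys by (intro image_eqI[of _ _ "(xs, x)"]) auto
next
  fix ys assume "ys \<in> (\<lambda>p. snd p # fst p) ` (SIGMA xs:indl W j. W - vec.span (set xs))"
  then obtain x xs where "ys = x # xs" "xs \<in> indl W j" "x \<in> W" "x \<notin> vec.span (set xs)" by auto
  then show "ys \<in> indl W (Suc j)"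
    unfolding indl_def using vec.span_base[of x "set xs"]
    by (auto simp: vec.independent_insert)
qed

lemma card_indl:
  fixes W :: "('a::{field,finite} ^ 'k) set"
  assumes W: "vec.subspace W"
  shows "real (card (indl W j)) = A_fun CARD('a) (vec.dim W) j"
proof (induction j)
  case 0
  have "indl W 0 = {[]}"
  proof
    show "indl W 0 \<subseteq> {[]}" by (auto simp: indl_def)
    show "{[]} \<subseteq> indl W 0" using vec.independent_empty by (simp add: indl_def)
  qed
  then show ?case by (simp add: A_fun_def)
next
  case (Suc j)
  have inj: "inj_on (\<lambda>p. snd p # fst p) (SIGMA xs:indl W j. W - vec.span (set xs))"
    by (rule inj_onI) auto
  have each: "real (card (W - vec.span (set xs))) = real CARD('a) ^ vec.dim W - real CARD('a) ^ j"
    if xs: "xs \<in> indl W j" for xs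
  proof -
    have sub: "vec.span (set xs) \<subseteq> W" using xs W unfolding indl_def using vec.span_minimal by blast
    have "card (set xs) = j" using xs unfolding indl_def by (simp add: distinct_card)
    then have cs: "card (vec.span (set xs)) = CARD('a) ^ j"
      using card_span_indep[of "set xs"] xs unfolding indl_def by simp
    have "card (W - vec.span (set xs)) = card W - card (vec.span (set xs))"
      using sub by (simp add: card_Diff_subset)
    moreover have "card (vec.span (set xs)) \<le> card W" using sub by (simp add: card_mono)
    ultimately show ?thesis using cs card_subspace[OF W] by (simp add: of_nat_diff)
  qed
  have "real (card (indl W (Suc j))) = real (card (SIGMA xs:indl W j. W - vec.span (set xs)))"
    unfolding indl_Suc using card_image[OF inj] by simp
  also have "\<dots> = (\<Sum>xs\<in>indl W j. real (card (W - vec.span (set xs))))"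
    using card_SigmaI[OF finite_indl, where B = "\<lambda>xs. W - vec.span (set xs)"] by (simp add: of_nat_sum)
  also have "\<dots> = (\<Sum>xs\<in>indl W j. real CARD('a) ^ vec.dim W - real CARD('a) ^ j)"
    using each by simp
  also have "\<dots> = real (card (indl W j)) * (real CARD('a) ^ vec.dim W - real CARD('a) ^ j)"
    by simp
  also have "\<dots> = A_fun CARD('a) (vec.dim W) (Suc j)"
    using Suc by (simp add: A_fun_def)
  finally show ?case .
qed

lemma indl_dim_span:
  fixes W :: "('a::{field,finite} ^ 'k) set"
  assumes W: "vec.subspace W" and xs: "xs \<in> indl W (vec.dim W)"
  shows "vec.span (set xs) = W"
proof -
  have "card (set xs) = vec.dim W" using xs unfolding indl_def by (simp add: distinct_card)
  then have "W \<subseteq> vec.span (set xs)" using xs vec.card_eq_dim[of "set xs" W] unfolding indl_def by auto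
  moreover have "vec.span (set xs) \<subseteq> W" using xs W unfolding indl_def using vec.span_minimal by blast
  ultimately show ?thesis by blast
qed

definition axes :: "'n set \<Rightarrow> ('a::field ^ 'n) set" where
  "axes S = (\<lambda>i. axis i 1) ` S"

definition Kc :: "('a::field ^ 'm) ^ 'n \<Rightarrow> ('a ^ 'n) set" where
  "Kc c = {a. Lc c a = 0}"

lemma Kc_subspace: "vec.subspace (Kc c)"
proof -
  interpret L: Vector_Spaces.linear "(*s)" "(*s)" "Lc c" by (rule Lc_linear)
  show ?thesis unfolding Kc_def by (rule L.subspace_kernel)
qed

lemma complement_exists:
  fixes b :: "('a::field ^ 'n) list"
  assumes "vec.independent (set b)"
  obtains S where "set b \<inter> axes S = {}" "vec.independent (set b \<union> axes S)"
    "\<And>j. axis j 1 \<in> vec.span (set b \<union> axes S)"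
proof -
  let ?V = "set b \<union> range (\<lambda>i. axis i (1::'a))"
  obtain B where B: "set b \<subseteq> B" "B \<subseteq> ?V" "vec.independent B" "?V \<subseteq> vec.span B"
    using vec.maximal_independent_subset_extend[of "set b" ?V] assms by blast
  define S where "S = {i. axis i 1 \<in> B - set b}"
  have ax: "axes S = B - set b" unfolding S_def axes_def using B(2) by auto
  show ?thesis
  proof
    show "set b \<inter> axes S = {}" using ax by auto
    have "set b \<union> axes S = B" using ax B(1) by auto
    then show "vec.independent (set b \<union> axes S)" using B(3) by simp
    fix j show "axis j 1 \<in> vec.span (set b \<union> axes S)"
      using B(4) \<open>set b \<union> axes S = B\<close> by auto
  qed
qed

lemma cols_in_span:
  fixes c :: "('a::field ^ 'm) ^ 'n"
  assumes sp: "axis j 1 \<in> vec.span (set b \<union> axes S)"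
    and bK: "set b \<subseteq> Kc c"
  shows "c $ j \<in> vec.span ((\<lambda>s. c $ s) ` S)"
proof -
  interpret L: Vector_Spaces.linear "(*s)" "(*s)" "Lc c" by (rule Lc_linear)
  have "c $ j = Lc c (axis j 1)" by (simp add: Lc_axis)
  also have "\<dots> \<in> Lc c ` vec.span (set b \<union> axes S)" using sp by blast
  also have "\<dots> = vec.span (Lc c ` (set b \<union> axes S))" by (rule L.span_image[symmetric])
  also have "\<dots> \<subseteq> vec.span (insert 0 ((\<lambda>s. c $ s) ` S))"
  proof (rule vec.span_mono)
    show "Lc c ` (set b \<union> axes S) \<subseteq> insert 0 ((\<lambda>s. c $ s) ` S)"
      using bK unfolding Kc_def axes_def by (auto simp: Lc_axis)
  qed
  also have "\<dots> = vec.span ((\<lambda>s. c $ s) ` S)" by simp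
  finally show ?thesis .
qed

lemma cols_indep_scalars:
  fixes c :: "('a::field ^ 'm) ^ 'n"
  assumes ind: "vec.independent (set b \<union> axes S)"
    and disj: "set b \<inter> axes S = {}"
    and Kb: "Kc c \<subseteq> vec.span (set b)"
    and sum0: "(\<Sum>s\<in>S. f s *s c $ s) = 0"
    and t: "t \<in> S"
  shows "f t = 0"
proof -
  interpret L: Vector_Spaces.linear "(*s)" "(*s)" "Lc c" by (rule Lc_linear)
  define a where "a = (\<Sum>s\<in>S. f s *s (axis s 1 :: 'a ^ 'n))"
  have "Lc c a = (\<Sum>s\<in>S. f s *s c $ s)"
    unfolding a_def by (simp add: L.sum L.scale Lc_axis)
  then have "a \<in> Kc c" using sum0 unfolding Kc_def by simp
  then have a1: "a \<in> vec.span (set b)" using Kb by blast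
  have a2: "a \<in> vec.span (axes S)"
    unfolding a_def axes_def
    by (intro vec.span_sum vec.span_scale vec.span_base) auto
  have "a = 0"
    by (rule span_inter_zero[OF _ ind disj a1 a2]) (simp add: axes_def)
  moreover have "a $ t = f t"
  proof -
    have "a $ t = (\<Sum>s\<in>S. f s * (axis s 1 :: 'a ^ 'n) $ t)" unfolding a_def by simp
    also have "\<dots> = (\<Sum>s\<in>S. if s = t then f s else 0)"
      by (rule sum.cong) (auto simp: axis_def)
    also have "\<dots> = f t" using t by simp
    finally show ?thesis .
  qed
  ultimately show ?thesis by simp
qed

lemma family_indep:
  fixes v :: "'i \<Rightarrow> 'a::field ^ 'm"
  assumes fin: "finite S"
    and H: "\<And>f t. (\<Sum>s\<in>S. f s *s v s) = 0 \<Longrightarrow> t \<in> S \<Longrightarrow> f t = 0"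
  shows "inj_on v S" "vec.independent (v ` S)"
proof -
  show inj: "inj_on v S"
  proof (rule inj_onI, rule ccontr)
    fix s t assume st: "s \<in> S" "t \<in> S" "v s = v t" "s \<noteq> t"
    define f where "f x = (if x = s then 1 else if x = t then -1 else (0::'a))" for x
    have "(\<Sum>x\<in>S. f x *s v x) = (\<Sum>x\<in>{s, t}. f x *s v x)"
    proof (rule sum.mono_neutral_right[OF fin])
      show "{s, t} \<subseteq> S" using st by simp
      show "\<forall>x\<in>S - {s, t}. f x *s v x = 0" by (simp add: f_def)
    qed
    also have "\<dots> = f s *s v s + f t *s v t" using st(4) by simp
    also have "\<dots> = 0" using st(3,4) by (simp add: f_def vector_smult_lneg)
    finally have "f s = 0" by (rule H) (rule st(1))
    then show False by (simp add: f_def)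
  qed
  show "vec.independent (v ` S)"
  proof (rule vec.independent_if_scalars_zero)
    show "finite (v ` S)" using fin by simp
    fix g y assume g: "(\<Sum>x\<in>v ` S. g x *s x) = 0" and y: "y \<in> v ` S"
    have "(\<Sum>s\<in>S. g (v s) *s v s) = 0" using g sum.reindex[OF inj, of "\<lambda>x. g x *s x"] by simp
    from y obtain s where s: "s \<in> S" "y = v s" by blast
    show "g y = 0" unfolding s(2) by (rule H[OF \<open>(\<Sum>s\<in>S. g (v s) *s v s) = 0\<close> s(1)])
  qed
qed

lemma span_full:
  assumes "\<And>j. axis j 1 \<in> vec.span X"
  shows "vec.span X = (UNIV :: ('a::field ^ 'n) set)"
proof -
  have "x \<in> vec.span X" for x :: "'a ^ 'n"
  proof -
    have "(\<Sum>i\<in>UNIV. x $ i *s axis i 1) \<in> vec.span X"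
      by (intro vec.span_sum vec.span_scale assms)
    then show ?thesis by (simp add: basis_expansion)
  qed
  then show ?thesis by auto
qed

lemma rank_struct:
  fixes c :: "('a::field ^ 'm) ^ 'n" and b :: "('a ^ 'n) list"
  assumes db: "distinct b" and spb: "vec.span (set b) = Kc c"
    and disj: "set b \<inter> axes S = {}" and ind: "vec.independent (set b \<union> axes S)"
    and sps: "\<And>j. axis j 1 \<in> vec.span (set b \<union> axes S)"
  shows "inj_on (\<lambda>s. c $ s) S" "vec.independent ((\<lambda>s. c $ s) ` S)"
    "rk c = card S" "card S + length b = CARD('n)"
proof -
  have bK: "set b \<subseteq> Kc c" using spb vec.span_superset by blast
  have Kb: "Kc c \<subseteq> vec.span (set b)" using spb by simp
  have H: "\<And>f t. (\<Sum>s\<in>S. f s *s c $ s) = 0 \<Longrightarrow> t \<in> S \<Longrightarrow> f t = 0"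
    using cols_indep_scalars[OF ind disj Kb] by blast
  have fS: "finite S" by simp
  show inj: "inj_on (\<lambda>s. c $ s) S" by (rule family_indep(1)[where v="\<lambda>s. c $ s"], rule fS, rule H, assumption+)
  show indc: "vec.independent ((\<lambda>s. c $ s) ` S)" by (rule family_indep(2)[where v="\<lambda>s. c $ s"], rule fS, rule H, assumption+)
  have "vec.span (range (\<lambda>i. c $ i)) = vec.span ((\<lambda>s. c $ s) ` S)"
    unfolding vec.span_eq
  proof
    show "range (\<lambda>i. c $ i) \<subseteq> vec.span ((\<lambda>s. c $ s) ` S)"
      using cols_in_span[OF sps bK] by blast
    show "(\<lambda>s. c $ s) ` S \<subseteq> vec.span (range (\<lambda>i. c $ i))"
      using vec.span_superset by blast
  qed
  then have "rk c = vec.dim ((\<lambda>s. c $ s) ` S)" unfolding rk_def by (rule vec.span_eq_dim)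
  also have "\<dots> = card ((\<lambda>s. c $ s) ` S)" by (rule vec.dim_eq_card_independent[OF indc])
  also have "\<dots> = card S" by (rule card_image[OF inj])
  finally show "rk c = card S" .
  have "card (set b \<union> axes S) = vec.dim (UNIV :: ('a ^ 'n) set)"
    by (rule vec.basis_card_eq_dim) (simp_all add: ind span_full[OF sps])
  then have "card (set b \<union> axes S) = CARD('n)" unfolding vec_dim_card .
  moreover have "card (set b \<union> axes S) = length b + card S"
  proof -
    have "inj_on (\<lambda>i. axis i (1::'a)) S" by (rule inj_onI) (simp add: axis_eq_axis)
    then have "card (axes S :: ('a ^ 'n) set) = card S" unfolding axes_def by (rule card_image)
    moreover have "finite (axes S :: ('a ^ 'n) set)" by (simp add: axes_def)
    ultimately show ?thesis using disj db card_Un_disjoint[of "set b" "axes S"] by (simp add: distinct_card)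
  qed
  ultimately show "card S + length b = CARD('n)" by simp
qed

lemma rank_nullity_Lc:
  fixes c :: "('a::field ^ 'm) ^ 'n"
  shows "rk c + vec.dim (Kc c) = CARD('n)"
proof -
  obtain B where B: "B \<subseteq> Kc c" "vec.independent B" "Kc c \<subseteq> vec.span B" "card B = vec.dim (Kc c)"
    using vec.basis_exists by blast
  have "finite B" using B(2) by (rule vec.finiteI_independent)
  then obtain b where b: "set b = B" "distinct b" using finite_distinct_list by blast
  have spb: "vec.span (set b) = Kc c"
    using B b Kc_subspace vec.span_minimal by blast
  obtain S where S: "set b \<inter> axes S = {}" "vec.independent (set b \<union> axes S)"
    "\<And>j. axis j 1 \<in> vec.span (set b \<union> axes S)"
    using complement_exists[of b] B(2) b(1) by blast
  note R = rank_struct[OF b(2) spb S]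
  have "length b = vec.dim (Kc c)" using b B(4) distinct_card by metis
  then show ?thesis using R(3,4) by simp
qed

lemma A_fun_split:
  assumes "j \<le> n"
  shows "A_fun q n n = A_fun q n j * real q ^ (j * (n - j)) * A_fun q (n - j) (n - j)"
proof -
  let ?Q = "real q"
  let ?f = "\<lambda>i. ?Q ^ n - ?Q ^ i"
  have "A_fun q n n = prod ?f {0..<n}" unfolding A_fun_def by (simp add: atLeast0LessThan)
  also have "\<dots> = prod ?f {0..<j} * prod ?f {j..<n}"
    using prod.atLeastLessThan_concat[of 0 j n ?f] assms by simp
  also have "prod ?f {j..<n} = prod (?f \<circ> plus j) {0..<n - j}"
    by (rule prod.atLeastLessThan_shift_0)
  also have "\<dots> = (\<Prod>l<n - j. ?Q ^ j * (?Q ^ (n - j) - ?Q ^ l))"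
  proof (rule prod.cong)
    show "{0..<n - j} = {..<n - j}" by (simp add: atLeast0LessThan)
    fix l assume "l \<in> {..<n - j}"
    have "?Q ^ n = ?Q ^ j * ?Q ^ (n - j)" using assms by (simp add: power_add[symmetric])
    then show "(?f \<circ> plus j) l = ?Q ^ j * (?Q ^ (n - j) - ?Q ^ l)"
      by (simp add: power_add right_diff_distrib)
  qed
  also have "\<dots> = (?Q ^ j) ^ (n - j) * A_fun q (n - j) (n - j)"
    unfolding A_fun_def by (simp add: prod.distrib)
  finally show ?thesis
    unfolding A_fun_def by (simp add: atLeast0LessThan power_mult)
qed

lemma A_fun_pos:
  assumes "1 < q"
  shows "0 < A_fun q j j"
  unfolding A_fun_def
proof (rule prod_pos)
  fix i assume "i \<in> {..<j}"
  then have "real q ^ i < real q ^ j" using assms by (intro power_strict_increasing) auto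
  then show "0 < real q ^ j - real q ^ i" by simp
qed



definition Sof :: "('a::field ^ 'n) list \<Rightarrow> 'n set" where
  "Sof b = (SOME S. set b \<inter> axes S = {} \<and> vec.independent (set b \<union> axes S) \<and>
                    (\<forall>j. axis j 1 \<in> vec.span (set b \<union> axes S)))"

lemma Sof_props:
  fixes b :: "('a::field ^ 'n) list"
  assumes "vec.independent (set b)"
  shows "set b \<inter> axes (Sof b) = {}" "vec.independent (set b \<union> axes (Sof b))"
    "\<And>j. axis j 1 \<in> vec.span (set b \<union> axes (Sof b))"
proof -
  have ex: "\<exists>S. set b \<inter> axes S = {} \<and> vec.independent (set b \<union> axes S) \<and>
                    (\<forall>j. axis j 1 \<in> vec.span (set b \<union> axes S))"
    using complement_exists[OF assms] by metis
  have "set b \<inter> axes (Sof b) = {} \<and> vec.independent (set b \<union> axes (Sof b)) \<and>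
                    (\<forall>j. axis j 1 \<in> vec.span (set b \<union> axes (Sof b)))"
    unfolding Sof_def by (rule someI_ex[OF ex])
  then show "set b \<inter> axes (Sof b) = {}" "vec.independent (set b \<union> axes (Sof b))"
    "\<And>j. axis j 1 \<in> vec.span (set b \<union> axes (Sof b))" by blast+
qed

definition enumS :: "('a::field ^ 'n) list \<Rightarrow> 'n list" where
  "enumS b = (SOME l. distinct l \<and> set l = Sof b)"

lemma enumS_props:
  fixes b :: "('a::field ^ 'n) list"
  shows "distinct (enumS b)" "set (enumS b) = Sof b"
proof -
  have "finite (Sof b)" by simp
  then have ex: "\<exists>l. distinct l \<and> set l = Sof b" using finite_distinct_list by metis
  have "distinct (enumS b) \<and> set (enumS b) = Sof b" unfolding enumS_def by (rule someI_ex[OF ex])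
  then show "distinct (enumS b)" "set (enumS b) = Sof b" by blast+
qed

lemma min_dist_le:
  fixes C :: "(('a::{field,finite} ^ 'm) ^ 'n) set"
  assumes "c \<in> C" "d \<in> C" "c \<noteq> d"
  shows "min_rank_dist C \<le> rk (c - d)"
proof -
  have "{rk (c - d) | c d. c \<in> C \<and> d \<in> C \<and> c \<noteq> d} \<subseteq> (\<lambda>p. rk (fst p - snd p)) ` (C \<times> C)"
    by force
  then have fin: "finite {rk (c - d) | c d. c \<in> C \<and> d \<in> C \<and> c \<noteq> d}"
    by (rule finite_subset) simp
  show ?thesis unfolding min_rank_dist_def
    by (rule Min_le[OF fin]) (use assms in blast)
qed

theorem lemma6:
  fixes C :: "(('a::{field,finite} ^ 'm) ^ 'n) set"
    and k r u :: nat
  assumes "CARD('n) \<le> CARD('m)"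
    and "1 \<le> k" and "k \<le> CARD('n)"
    and "card C = CARD('a) ^ (CARD('m) * k)"
    and "min_rank_dist C = CARD('n) - k + 1"
    and "r = CARD('n) - k"
    and "min_rank_dist C \<le> u" and "u \<le> CARD('n)"
  shows "real (weight_count C u)
           \<le> gauss_binom CARD('a) CARD('n) u * A_fun CARD('a) CARD('m) (u - r)"
proof -
  let ?n = "CARD('n)" and ?m = "CARD('m)" and ?q = "CARD('a)"
  define N where "N = ?n - u"
  define D where "D = {c \<in> C. rk c = u}"
  define P where "P = (SIGMA c:D. indl (Kc c) N)"
  have dmin: "min_rank_dist C = r + 1" using assms by simp
  have ur: "r < u" using assms dmin by simp
  have dist: "r + 1 \<le> rk (c - c')" if "c \<in> C" "c' \<in> C" "c \<noteq> c'" for c c'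
    using min_dist_le[OF that] dmin by simp
  have q1: "1 < ?q"
  proof -
    have "card {0::'a, 1} \<le> ?q" by (rule card_mono) auto
    then show ?thesis by simp
  qed
  have dimK: "vec.dim (Kc c) = N" if "c \<in> D" for c
    using rank_nullity_Lc[of c] that unfolding D_def N_def by simp
  have Pfacts: "vec.span (set b) = Kc c \<and> distinct b \<and> vec.independent (set b) \<and> length b = N
      \<and> inj_on (\<lambda>s. c $ s) (Sof b) \<and> vec.independent ((\<lambda>s. c $ s) ` Sof b) \<and> card (Sof b) = u"
    if "(c, b) \<in> P" for c b
  proof -
    have cD: "c \<in> D" and bI: "b \<in> indl (Kc c) N" using that unfolding P_def by auto
    have spb: "vec.span (set b) = Kc c"
      using indl_dim_span[OF Kc_subspace, of b c] bI dimK[OF cD] by simp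
    have db: "distinct b" "vec.independent (set b)" "length b = N" using bI unfolding indl_def by auto
    note R = rank_struct[OF db(1) spb Sof_props[OF db(2)]]
    have "card (Sof b) = u" using R(3) cD unfolding D_def by simp
    then show ?thesis using spb db R(1,2) by blast
  qed
  define \<Phi> where "\<Phi> = (\<lambda>p :: (('a ^ 'm) ^ 'n) \<times> ('a ^ 'n) list. (snd p, map (\<lambda>s. fst p $ s) (take (u - r) (enumS (snd p)))))"
  have fin1: "finite (indl (UNIV :: ('a ^ 'n) set) N)" by (rule finite_indl)
  have fin2: "finite (indl (UNIV :: ('a ^ 'm) set) (u - r))" by (rule finite_indl)
  have maps: "\<Phi> ` P \<subseteq> indl (UNIV :: ('a ^ 'n) set) N \<times> indl (UNIV :: ('a ^ 'm) set) (u - r)"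
  proof
    fix y assume "y \<in> \<Phi> ` P"
    then obtain c b where cb: "(c, b) \<in> P" "y = \<Phi> (c, b)" by auto
    note F = Pfacts[OF cb(1)]
    have le: "length (enumS b) = u" using F enumS_props[of b] distinct_card by metis
    let ?T = "take (u - r) (enumS b)"
    have sT: "set ?T \<subseteq> Sof b" using enumS_props(2)[of b] set_take_subset by metis
    have "b \<in> indl UNIV N" using F unfolding indl_def by auto
    moreover have "map (\<lambda>s. c $ s) ?T \<in> indl UNIV (u - r)"
      unfolding indl_def
    proof (intro CollectI conjI)
      show "length (map (\<lambda>s. c $ s) ?T) = u - r" using le by simp
      show "distinct (map (\<lambda>s. c $ s) ?T)"
      proof -
        have "inj_on (\<lambda>s. c $ s) (Sof b)" using F by blast
        then have "inj_on (\<lambda>s. c $ s) (set ?T)" using sT by (rule inj_on_subset)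
        then show ?thesis using enumS_props(1)[of b] by (simp add: distinct_map)
      qed
      show "vec.independent (set (map (\<lambda>s. c $ s) ?T))"
      proof -
        have "vec.independent ((\<lambda>s. c $ s) ` Sof b)" using F by blast
        then have "vec.independent ((\<lambda>s. c $ s) ` set ?T)" using image_mono[OF sT] by (rule vec.independent_mono)
        then show ?thesis by simp
      qed
      show "set (map (\<lambda>s. c $ s) ?T) \<subseteq> UNIV" by simp
    qed
    ultimately show "y \<in> indl UNIV N \<times> indl UNIV (u - r)" using cb(2) unfolding \<Phi>_def by simp
  qed
  have inj: "inj_on \<Phi> P"
  proof (rule inj_onI)
    fix p p' assume p: "p \<in> P" and p': "p' \<in> P" and e: "\<Phi> p = \<Phi> p'"
    obtain c b where cb: "p = (c, b)" by (cases p)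
    obtain c' b' where cb': "p' = (c', b')" by (cases p')
    have bb: "b' = b" using e cb cb' unfolding \<Phi>_def by simp
    let ?T = "take (u - r) (enumS b)" and ?R = "drop (u - r) (enumS b)"
    have agree: "c $ s = c' $ s" if "s \<in> set ?T" for s
    proof -
      have "map (\<lambda>s. c $ s) ?T = map (\<lambda>s. c' $ s) ?T" using e cb cb' bb unfolding \<Phi>_def by simp
      then show ?thesis using that by (simp add: map_eq_conv)
    qed
    have cc: "c = c'"
    proof (rule ccontr)
      assume ne: "c \<noteq> c'"
      have cC: "c \<in> C" "c' \<in> C" using p p' cb cb' unfolding P_def D_def by auto
      note F = Pfacts[of c b] Pfacts[of c' b]
      have F1: "vec.span (set b) = Kc c" "vec.independent (set b)" using F(1) p cb by auto
      have F2: "vec.span (set b) = Kc c'" using F(2) p' cb' bb by auto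
      have le: "length (enumS b) = u" using F(1) p cb enumS_props[of b] distinct_card by metis
      define e where "e = c - c'"
      have bK: "set b \<subseteq> Kc e"
      proof
        fix x assume "x \<in> set b"
        then have "x \<in> Kc c" "x \<in> Kc c'" using F1 F2 vec.span_superset by blast+
        then show "x \<in> Kc e" unfolding Kc_def e_def by (simp add: Lc_diff)
      qed
      have r1: "range (\<lambda>j. e $ j) \<subseteq> vec.span ((\<lambda>s. e $ s) ` Sof b)"
        using cols_in_span[OF Sof_props(3)[OF F1(2)] bK] by blast
      have r2: "(\<lambda>s. e $ s) ` Sof b \<subseteq> insert 0 ((\<lambda>s. e $ s) ` set ?R)"
      proof
        fix y assume "y \<in> (\<lambda>s. e $ s) ` Sof b"
        then obtain s where s: "s \<in> Sof b" "y = e $ s" by blast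
        have "set ?T \<union> set ?R = set (enumS b)" by (simp only: set_append[symmetric] append_take_drop_id)
        then have "s \<in> set ?T \<or> s \<in> set ?R" using s(1) enumS_props(2)[of b] by blast
        then show "y \<in> insert 0 ((\<lambda>s. e $ s) ` set ?R)"
        proof
          assume "s \<in> set ?T"
          then have "y = 0" using s(2) agree[of s] unfolding e_def by simp
          then show ?thesis by simp
        next
          assume "s \<in> set ?R"
          then show ?thesis using s(2) by blast
        qed
      qed
      have r3: "vec.span ((\<lambda>s. e $ s) ` Sof b) \<subseteq> vec.span ((\<lambda>s. e $ s) ` set ?R)"
        using vec.span_mono[OF r2] by simp
      have "range (\<lambda>j. e $ j) \<subseteq> vec.span ((\<lambda>s. e $ s) ` set ?R)" using r1 r3 by blast
      then have "rk e \<le> card ((\<lambda>s. e $ s) ` set ?R)"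
        unfolding rk_def by (rule vec.dim_le_card) simp
      also have "\<dots> \<le> card (set ?R)" by (rule card_image_le) simp
      also have "\<dots> \<le> length ?R" by (rule card_length)
      also have "\<dots> = r" using le ur by simp
      finally have "rk e \<le> r" .
      moreover have "r + 1 \<le> rk e" unfolding e_def by (rule dist[OF cC ne])
      ultimately show False by simp
    qed
    show "p = p'" using cb cb' bb cc by simp
  qed
  have "card P \<le> card (indl (UNIV :: ('a ^ 'n) set) N \<times> indl (UNIV :: ('a ^ 'm) set) (u - r))"
    by (rule card_inj_on_le[OF inj maps]) (simp add: fin1 fin2)
  then have "card P \<le> card (indl (UNIV :: ('a ^ 'n) set) N) * card (indl (UNIV :: ('a ^ 'm) set) (u - r))"
    by (simp add: card_cartesian_product)
  then have "real (card P) \<le> real (card (indl (UNIV :: ('a ^ 'n) set) N) * card (indl (UNIV :: ('a ^ 'm) set) (u - r)))"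
    by (rule of_nat_mono)
  then have "real (card P) \<le> real (card (indl (UNIV :: ('a ^ 'n) set) N)) * real (card (indl (UNIV :: ('a ^ 'm) set) (u - r)))"
    by (simp only: of_nat_mult)
  also have "\<dots> = A_fun ?q ?n N * A_fun ?q ?m (u - r)"
  proof -
    have "real (card (indl (UNIV::('a ^ 'n) set) N)) = A_fun ?q (vec.dim (UNIV::('a ^ 'n) set)) N"
      by (rule card_indl[OF vec.subspace_UNIV])
    moreover have "real (card (indl (UNIV::('a ^ 'm) set) (u - r))) = A_fun ?q (vec.dim (UNIV::('a ^ 'm) set)) (u - r)"
      by (rule card_indl[OF vec.subspace_UNIV])
    ultimately show ?thesis by (simp only: vec_dim_card)
  qed
  finally have ineq1: "real (card P) \<le> A_fun ?q ?n N * A_fun ?q ?m (u - r)" .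
  have "real (card P) = (\<Sum>c\<in>D. real (card (indl (Kc c) N)))"
  proof -
    have "card P = (\<Sum>c\<in>D. card (indl (Kc c) N))"
      unfolding P_def by (rule card_SigmaI) (simp_all add: finite_indl)
    then show ?thesis by (simp add: of_nat_sum)
  qed
  also have "\<dots> = (\<Sum>c\<in>D. A_fun ?q N N)"
  proof (rule sum.cong[OF refl])
    fix c assume "c \<in> D"
    have "real (card (indl (Kc c) N)) = A_fun ?q (vec.dim (Kc c)) N"
      by (rule card_indl[OF Kc_subspace])
    then show "real (card (indl (Kc c) N)) = A_fun ?q N N" using dimK[OF \<open>c \<in> D\<close>] by simp
  qed
  also have "\<dots> = real (card D) * A_fun ?q N N" by simp
  finally have ineq2: "real (card D) * A_fun ?q N N \<le> A_fun ?q ?n N * A_fun ?q ?m (u - r)"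
    using ineq1 by simp
  have posN: "0 < A_fun ?q N N" and posu: "0 < A_fun ?q u u" using A_fun_pos[OF q1] by auto
  have Qp: "0 < real ?q ^ (u * N)" using q1 by simp
  have s1: "A_fun ?q ?n ?n = A_fun ?q ?n u * real ?q ^ (u * N) * A_fun ?q N N"
    using A_fun_split[of u ?n ?q] assms(8) unfolding N_def by simp
  have s2: "A_fun ?q ?n ?n = A_fun ?q ?n N * real ?q ^ (u * N) * A_fun ?q u u"
    using A_fun_split[of N ?n ?q] assms(8) unfolding N_def by (simp add: mult.commute)
  have "A_fun ?q ?n u * real ?q ^ (u * N) * A_fun ?q N N = A_fun ?q ?n N * real ?q ^ (u * N) * A_fun ?q u u"
    by (simp only: s1[symmetric] s2[symmetric])
  then have "(A_fun ?q ?n N * A_fun ?q u u) * real ?q ^ (u * N) = (A_fun ?q ?n u * A_fun ?q N N) * real ?q ^ (u * N)"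
    by (simp only: ac_simps)
  then have id: "A_fun ?q ?n N * A_fun ?q u u = A_fun ?q ?n u * A_fun ?q N N"
    using Qp by simp
  have "real (card D) \<le> A_fun ?q ?n N * A_fun ?q ?m (u - r) / A_fun ?q N N"
    using ineq2 posN by (simp add: pos_le_divide_eq)
  also have "\<dots> = A_fun ?q ?n u / A_fun ?q u u * A_fun ?q ?m (u - r)"
  proof -
    have "A_fun ?q ?n N / A_fun ?q N N = A_fun ?q ?n u / A_fun ?q u u"
      using id posN posu by (simp add: frac_eq_eq)
    moreover have "A_fun ?q ?n N * A_fun ?q ?m (u - r) / A_fun ?q N N = (A_fun ?q ?n N / A_fun ?q N N) * A_fun ?q ?m (u - r)"
      by simp
    ultimately show ?thesis by simp
  qed
  finally show ?thesis unfolding weight_count_def gauss_binom_def D_def .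
qed

end
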